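(* Let $r:\mathbb{R}\to[0,1]$, $0<\phi\le1$, $\eta_\lambda>0$, $\alpha\in(0,1)$, and let $(\lambda^*,c^* )$ be a fixed point of $F(\lambda,c)=\big(\phi\lambda-\eta_\lambda(r(\lambda)-c),\ (1-\alpha)c+\alpha r(\lambda)\big)$ (so $r(\lambda^* )=c^*$), with $r$ differentiable at $\lambda^*$ and $s=r'(\lambda^* )$. Consider the stochastic recursion $\lambda_{t+1}=\phi\lambda_t-\eta_\lambda(r_t-c_t)$, $c_{t+1}=(1-\alpha)c_t+\alpha r_t$, where the empirical flip rate is $r_t=r(\lambda_t)+\xi_t$ with $\mathbb{E}[\xi_t\mid\lambda_t]=0$ and $|\xi_t|\le\delta$ almost surely for some $\delta>0$. If the Jacobian $J=\begin{pmatrix}\phi-\eta_\lambda s & \eta_\lambda\\ \alpha s & 1-\alpha\end{pmatrix}$ has spectral radius $\rho(J)<1$, then the trajectory $(\lambda_t,c_t)$ is almost surely bounded, i.e. $\sup_{t\ge0}\|(\lambda_t,c_t)\|<\infty$ almost surely.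
   Context: Interpretation: within a mean-field approximation with RBM parameters frozen at $\theta^*$, $r(\lambda)=r(\theta^*,\lambda)$ is the mean Gibbs-sampler flip rate at log-temperature $\lambda$ (temperature $e^\lambda$), and $c_t$ is an exponentially smoothed reference flip rate. *)

theory Defs
  imports "HOL-Probability.Probability" "Jordan_Normal_Form.Spectral_Radius"
begin

text \<open>The Jacobian of F(lambda,c) at the fixed point, as a complex 2x2 matrix
  (so that the library spectral radius applies).\<close>
definition jacobian_J :: "real \<Rightarrow> real \<Rightarrow> real \<Rightarrow> real \<Rightarrow> complex mat" where
  "jacobian_J phi eta alpha s =
     mat_of_rows_list 2
       [[complex_of_real (phi - eta * s), complex_of_real eta],
        [complex_of_real (alpha * s), complex_of_real (1 - alpha)]]"

definition F_map :: "(real \<Rightarrow> real) \<Rightarrow> real \<Rightarrow> real \<Rightarrow> real \<Rightarrow> real \<times> real \<Rightarrow> real \<times> real" where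
  "F_map r phi eta alpha = (\<lambda>(l, c). (phi * l - eta * (r l - c), (1 - alpha) * c + alpha * r l))"

end

theory Submission
  imports Defs
begin


lemma sp1: assumes "spectral_radius (jacobian_J 1 eta alpha s) < 1" shows False
proof -
  define J where "J = jacobian_J 1 eta alpha s"
  have J: "J \<in> carrier_mat 2 2" unfolding J_def jacobian_J_def mat_of_rows_list_def carrier_mat_def
    by simp
  have J00: "J $$ (0,0) = complex_of_real (1 - eta * s)"
    unfolding J_def jacobian_J_def mat_of_rows_list_def by simp
  have J01: "J $$ (0,1) = complex_of_real eta"
    unfolding J_def jacobian_J_def mat_of_rows_list_def by simp
  have J10: "J $$ (1,0) = complex_of_real (alpha * s)"
    unfolding J_def jacobian_J_def mat_of_rows_list_def by simp
  have J11: "J $$ (1,1) = complex_of_real (1 - alpha)"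
    unfolding J_def jacobian_J_def mat_of_rows_list_def by simp
  define v where "v = vec 2 (\<lambda>i. if i = 0 then 1 else complex_of_real s)"
  have v: "v \<in> carrier_vec 2" unfolding v_def by (rule vec_carrier)
  have v0: "v $ 0 = 1" unfolding v_def by simp
  have v1: "v $ 1 = complex_of_real s" unfolding v_def by simp
  have dr: "dim_row J = 2" "dim_col J = 2" using J by auto
  have dv: "dim_vec v = 2" using v by auto
  have nz: "v \<noteq> 0\<^sub>v 2"
  proof
    assume "v = 0\<^sub>v 2"
    hence "v $ 0 = (0\<^sub>v 2 :: complex vec) $ 0" by simp
    thus False using v0 by simp
  qed
  have comp: "(J *\<^sub>v v) $ i = J $$ (i, 0) * v $ 0 + J $$ (i, 1) * v $ 1" if "i < 2" for i
  proof -
    have "(J *\<^sub>v v) $ i = row J i \<bullet> v" using that dr by simp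
    also have "\<dots> = (\<Sum>j\<in>{0..<2}. row J i $ j * v $ j)" unfolding scalar_prod_def dv ..
    also have "\<dots> = row J i $ 0 * v $ 0 + row J i $ 1 * v $ 1"
      by (simp add: numeral_2_eq_2)
    also have "\<dots> = J $$ (i, 0) * v $ 0 + J $$ (i, 1) * v $ 1"
      using that dr by simp
    finally show ?thesis .
  qed
  have ev: "J *\<^sub>v v = 1 \<cdot>\<^sub>v v"
  proof (rule eq_vecI)
    show "dim_vec (J *\<^sub>v v) = dim_vec (1 \<cdot>\<^sub>v v)" using dr dv by simp
    fix i assume "i < dim_vec (1 \<cdot>\<^sub>v v)"
    hence i: "i < 2" using dv by simp
    hence "i = 0 \<or> i = 1" by auto
    thus "(J *\<^sub>v v) $ i = (1 \<cdot>\<^sub>v v) $ i"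
    proof
      assume "i = 0" thus ?thesis using comp[of 0] J00 J01 v0 v1 dv
        by (simp add: algebra_simps)
    next
      assume i1: "i = 1"
      have "(J *\<^sub>v v) $ 1 = complex_of_real (alpha * s) * 1 + complex_of_real (1 - alpha) * complex_of_real s"
        using comp[of 1] unfolding J10 J11 v0 v1 by simp
      also have "\<dots> = complex_of_real (alpha * s * 1 + (1 - alpha) * s)"
        by (simp only: of_real_mult of_real_add of_real_1)
      also have "alpha * s * 1 + (1 - alpha) * s = s" by (simp add: algebra_simps)
      finally show ?thesis using i1 v1 dv by simp
    qed
  qed
  have "eigenvector J v 1" unfolding eigenvector_def using v nz ev dr by simp
  hence "1 \<in> spectrum J" unfolding spectrum_def eigenvalue_def by auto
  hence "cmod 1 \<in> cmod ` spectrum J" by (rule imageI)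
  hence "cmod 1 \<le> spectral_radius J" using spectral_radius_mem_max(2)[OF J] by simp
  thus False using assms unfolding J_def by simp
qed

lemma bounded_traj:
  fixes M :: "'w measure" and r :: "real \<Rightarrow> real"
    and phi eta alpha delta :: real and lam c xi :: "nat \<Rightarrow> 'w \<Rightarrow> real"
  assumes r_range: "\<And>x. 0 \<le> r x \<and> r x \<le> 1"
    and "0 < phi" "phi < 1" "0 < eta" "0 < alpha" "alpha < 1" "0 < delta"
    and xi_bound: "\<And>t. AE w in M. \<bar>xi t w\<bar> \<le> delta"
    and rec_lam: "\<And>t w. w \<in> space M \<Longrightarrow>
          lam (Suc t) w = phi * lam t w - eta * ((r (lam t w) + xi t w) - c t w)"
    and rec_c: "\<And>t w. w \<in> space M \<Longrightarrow>
          c (Suc t) w = (1 - alpha) * c t w + alpha * (r (lam t w) + xi t w)"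
  shows "AE w in M. \<exists>B. \<forall>t. norm (lam t w, c t w) \<le> B"
proof -
  have "AE w in M. \<forall>t. \<bar>xi t w\<bar> \<le> delta" using xi_bound by (simp add: AE_all_countable)
  then show ?thesis
  proof (rule AE_mp[OF _ AE_I2], intro impI)
    fix w assume w: "w \<in> space M" and xb: "\<forall>t. \<bar>xi t w\<bar> \<le> delta"
    have xr: "\<bar>r (lam t w) + xi t w\<bar> \<le> 1 + delta" for t
    proof -
      have "-delta \<le> xi t w \<and> xi t w \<le> delta" using xb[rule_format, of t] by (simp add: abs_le_iff)
      then show ?thesis using r_range[of "lam t w"] by (simp add: abs_le_iff)
    qed
    define C where "C = max \<bar>c 0 w\<bar> (1 + delta)"
    have cb: "\<bar>c t w\<bar> \<le> C" for t
    proof (induction t)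
      case 0 then show ?case by (simp add: C_def)
    next
      case (Suc t)
      have "\<bar>c (Suc t) w\<bar> \<le> (1 - alpha) * \<bar>c t w\<bar> + alpha * \<bar>r (lam t w) + xi t w\<bar>"
        unfolding rec_c[OF w, of t]
        using abs_triangle_ineq[of "(1 - alpha) * c t w" "alpha * (r (lam t w) + xi t w)"] assms(5,6)
        by (simp add: abs_mult)
      also have "\<dots> \<le> (1 - alpha) * C + alpha * C"
        using Suc xr[of t] assms(5,6) C_def
        by (intro add_mono mult_left_mono) auto
      finally show ?case by (simp add: algebra_simps)
    qed
    define K where "K = eta * (1 + delta + C)"
    define L where "L = max \<bar>lam 0 w\<bar> (K / (1 - phi))"
    have KL: "K \<le> (1 - phi) * L"
    proof -
      have "K / (1 - phi) \<le> L" unfolding L_def by simp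
      hence "(1 - phi) * (K / (1 - phi)) \<le> (1 - phi) * L"
        using assms(3) by (intro mult_left_mono) auto
      thus ?thesis using assms(3) by simp
    qed
    have lb: "\<bar>lam t w\<bar> \<le> L" for t
    proof (induction t)
      case 0 then show ?case by (simp add: L_def)
    next
      case (Suc t)
      have e: "\<bar>r (lam t w) + xi t w - c t w\<bar> \<le> 1 + delta + C"
        using xr[of t] cb[of t] by linarith
      have "\<bar>lam (Suc t) w\<bar> \<le> phi * \<bar>lam t w\<bar> + eta * \<bar>r (lam t w) + xi t w - c t w\<bar>"
        unfolding rec_lam[OF w, of t]
        using abs_triangle_ineq4[of "phi * lam t w" "eta * (r (lam t w) + xi t w - c t w)"] assms(2,4)
        by (simp add: abs_mult)
      also have "\<dots> \<le> phi * L + K"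
        unfolding K_def using Suc e assms(2,4) by (intro add_mono mult_left_mono) auto
      also have "\<dots> \<le> L" using KL by (simp add: algebra_simps)
      finally show ?case .
    qed
    have "norm (lam t w, c t w) \<le> L + C" for t
      using norm_Pair_le[of "lam t w" "c t w"] lb[of t] cb[of t] by simp
    then show "\<exists>B. \<forall>t. norm (lam t w, c t w) \<le> B" by blast
  qed
qed
theorem proposition1:
  fixes M :: "'w measure"
    and r :: "real \<Rightarrow> real"
    and phi eta alpha delta lstar cstar s :: real
    and lam c xi :: "nat \<Rightarrow> 'w \<Rightarrow> real"
  assumes "prob_space M"
    and r_range: "\<And>x. 0 \<le> r x \<and> r x \<le> 1"
    and "0 < phi" "phi \<le> 1" "0 < eta" "0 < alpha" "alpha < 1" "0 < delta"
    and fixed: "F_map r phi eta alpha (lstar, cstar) = (lstar, cstar)"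
    and deriv: "(r has_real_derivative s) (at lstar)"
    and lam_meas: "\<And>t. lam t \<in> borel_measurable M"
    and c_meas: "\<And>t. c t \<in> borel_measurable M"
    and xi_int: "\<And>t. integrable M (xi t)"
    and xi_cond: "\<And>t. AE w in M.
          real_cond_exp M (vimage_algebra (space M) (lam t) borel) (xi t) w = 0"
    and xi_bound: "\<And>t. AE w in M. \<bar>xi t w\<bar> \<le> delta"
    and rec_lam: "\<And>t w. w \<in> space M \<Longrightarrow>
          lam (Suc t) w = phi * lam t w - eta * ((r (lam t w) + xi t w) - c t w)"
    and rec_c: "\<And>t w. w \<in> space M \<Longrightarrow>
          c (Suc t) w = (1 - alpha) * c t w + alpha * (r (lam t w) + xi t w)"
    and spec: "spectral_radius (jacobian_J phi eta alpha s) < 1"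
  shows "AE w in M. \<exists>B. \<forall>t. norm (lam t w, c t w) \<le> B"
  proof (cases "phi < 1")
  case True
  show ?thesis
    by (rule bounded_traj[where M=M and r=r and xi=xi and lam=lam and c=c, OF r_range assms(3) True assms(5,6,7,8) xi_bound rec_lam rec_c])
next
  case False
  hence "phi = 1" using assms(4) by simp
  thus ?thesis using sp1 spec by blast
qed

end
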